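(* Let $\mathsf P$ be a one-move rider with basic move $(c,d)$ and let $\mathcal B$ be a board. The denominator of the inside-out polytope $(\mathcal B^q,\mathcal A_{\mathsf P})$ equals the least common denominator of the corners of $\mathcal B$ when $q=1$, and when $q\ge2$ it equals the least common denominator of the corners of $\mathcal B$ and their antipodes.
   Context: A board $\mathcal B$ is a convex polygon in $\mathbb R^2$ with rational corners (vertices). A one-move rider has a single basic move $(c,d)\in\mathbb Z^2\setminus\{0\}$ with $\gcd(c,d)=1$. For $q$ pieces, $\mathcal A_{\mathsf P}$ is the arrangement in $\mathbb R^{2q}$ of hyperplanes $\mathcal H_{ij}=\{(z_1,\dots,z_q):(z_j-z_i)\cdot(d,-c)=0\}$, $1\le i<j\le q$. A vertex of $(\mathcal B^q,\mathcal A_{\mathsf P})$ is a point of $\mathcal B^q$ that is the unique point of an intersection of some of these hyperplanes and some affine hulls of facets of $\mathcal B^q$; the denominator of $(\mathcal B^q,\mathcal A_{\mathsf P})$ is the least common multiple of the least common denominators of the coordinates of its vertices. For a corner $z$ of $\mathcal B$, its antipode is the other point (if any) where the line through $z$ parallel to $(c,d)$ meets the boundary of $\mathcal B$ (possibly another corner); if $(c,d)$ is parallel to an edge $z_iz_j$ of $\mathcal B$, the corners $z_i$ and $z_j$ are each other's antipodes. The least common denominator of a set of rational points is the least common multiple of the denominators of all their coordinates. *)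

theory Defs
  imports "HOL-Analysis.Analysis"
begin

text \<open>Points of the plane are pairs of reals; a configuration of q pieces is an
  element of (real \<times> real)^'q, where the finite type 'q has exactly q elements.\<close>

type_synonym pt = "real \<times> real"

definition rational_pt :: "pt \<Rightarrow> bool" where
  "rational_pt p \<longleftrightarrow> fst p \<in> \<rat> \<and> snd p \<in> \<rat>"

definition board :: "pt set \<Rightarrow> bool" where
  "board B \<longleftrightarrow> polytope B \<and> interior B \<noteq> {} \<and>
     (\<forall>v. v extreme_point_of B \<longrightarrow> rational_pt v)"

definition corners :: "pt set \<Rightarrow> pt set" where
  "corners B = {v. v extreme_point_of B}"

text \<open>Denominator of a rational real number (1 for non-rationals, irrelevant here).\<close>
definition real_den :: "real \<Rightarrow> nat" where
  "real_den x = (if x \<in> \<rat> then nat (snd (quotient_of (THE r. of_rat r = x))) else 1)"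

definition lcd_pts :: "pt set \<Rightarrow> nat" where
  "lcd_pts P = Lcm ((\<lambda>p. lcm (real_den (fst p)) (real_den (snd p))) ` P)"

definition lcd_cfgs :: "(pt ^ 'q::finite) set \<Rightarrow> nat" where
  "lcd_cfgs Z = Lcm ((\<lambda>z. Lcm ((\<lambda>k. lcm (real_den (fst (z $ k))) (real_den (snd (z $ k)))) ` UNIV)) ` Z)"

definition board_power :: "pt set \<Rightarrow> (pt ^ 'q::finite) set" where
  "board_power B = {z. \<forall>k. z $ k \<in> B}"

definition rider_hyperplane :: "int \<Rightarrow> int \<Rightarrow> 'q::finite \<Rightarrow> 'q \<Rightarrow> (pt ^ 'q) set" where
  "rider_hyperplane c d i j = {z. inner (z $ j - z $ i) (of_int d, - of_int c) = 0}"

definition iop_vertices :: "int \<Rightarrow> int \<Rightarrow> pt set \<Rightarrow> (pt, 'q::{finite,linorder}) vec set" where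
  "iop_vertices c d B = {z :: (pt, 'q) vec. z \<in> board_power B \<and> (\<exists>S \<FF>.
      S \<subseteq> {(i, j). i < j} \<and> (\<forall>F\<in>\<FF>. F facet_of (board_power B :: (pt, 'q) vec set)) \<and>
      (\<Inter>(i, j)\<in>S. rider_hyperplane c d i j) \<inter> (\<Inter>F\<in>\<FF>. affine hull F) = {z})}"

definition iop_denominator :: "int \<Rightarrow> int \<Rightarrow> pt set \<Rightarrow> 'q::{finite,linorder} itself \<Rightarrow> nat" where
  "iop_denominator c d B _ = lcd_cfgs (iop_vertices c d B :: (pt, 'q) vec set)"

text \<open>Antipodes of a corner z: the line through z parallel to (c,d) meets the convex
  board B in a segment with endpoint z; the antipodes are its endpoints other than z.
  This is the other boundary point on the line, and, when (c,d) is parallel to an edge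
  z z', it is the corner z'.\<close>
definition antipodes :: "int \<Rightarrow> int \<Rightarrow> pt set \<Rightarrow> pt \<Rightarrow> pt set" where
  "antipodes c d B z = {w. w \<noteq> z \<and>
      w extreme_point_of (B \<inter> {z + t *\<^sub>R (of_int c, of_int d) | t. True})}"

end

theory Submission imports Defs begin

lemma bp_polyhedron:
  assumes "polyhedron B"
  shows "polyhedron (board_power B :: (pt^'q::finite) set)"
proof -
  obtain F where F: "finite F" "B = \<Inter>F" "\<And>h. h \<in> F \<Longrightarrow> \<exists>a b. a \<noteq> 0 \<and> h = {x. a \<bullet> x \<le> b}"
    using assms unfolding polyhedron_def by blast
  have eq: "board_power B = \<Inter>((\<lambda>(k,h). {z::pt^'q. z$k \<in> h}) ` (UNIV \<times> F))"
    using F(2) by (auto simp: board_power_def)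
  have "polyhedron {z::pt^'q. z$k \<in> h}" if hF: "h \<in> F" for k h
  proof -
    obtain a b where "h = {x. a \<bullet> x \<le> b}" using F(3)[OF hF] by blast
    then have "{z::pt^'q. z$k \<in> h} = {z. axis k a \<bullet> z \<le> b}" by (auto simp: inner_axis')
    then show ?thesis by (simp add: polyhedron_halfspace_le)
  qed
  then show ?thesis unfolding eq using F(1) by (intro polyhedron_Inter) auto
qed

lemma bp_interior:
  assumes "interior B \<noteq> {}"
  shows "interior (board_power B :: (pt^'q::finite) set) \<noteq> {}"
proof -
  obtain p where "p \<in> interior B" using assms by blast
  then obtain r where r: "r > 0" "ball p r \<subseteq> B" using mem_interior by blast
  have "ball (\<chi> k. p) r \<subseteq> (board_power B :: (pt^'q) set)"
  proof
    fix y :: "pt^'q" assume "y \<in> ball (\<chi> k. p) r"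
    then have "dist (y$k) p < r" for k
    proof -
      have "dist (y$k) ((\<chi> k. p)$k) \<le> dist y (\<chi> k. p)" by (rule dist_vec_nth_le)
      then show ?thesis using \<open>y \<in> ball (\<chi> k. p) r\<close> by (simp add: dist_commute)
    qed
    then show "y \<in> board_power B" using r(2) by (auto simp: board_power_def dist_commute)
  qed
  then have "(\<chi> k. p) \<in> interior (board_power B :: (pt^'q) set)"
    using r(1) mem_interior by blast
  then show ?thesis by blast
qed

lemma facet_hyp:
  fixes P :: "'a::euclidean_space set"
  assumes "polyhedron P" "interior P \<noteq> {}" "F facet_of P"
  shows "\<exists>a b. a \<noteq> 0 \<and> P \<subseteq> {x. a \<bullet> x \<le> b} \<and> affine hull F = {x. a \<bullet> x = b}"
proof -
  obtain a b where ab: "a \<noteq> 0" "P \<subseteq> {x. a \<bullet> x \<le> b}" "F = P \<inter> {x. a \<bullet> x = b}"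
    using facet_of_polyhedron[OF assms(1,3)] by blast
  have sub: "affine hull F \<subseteq> {x. a \<bullet> x = b}"
    using ab(3) by (intro hull_minimal) (auto simp: affine_hyperplane)
  have "F \<noteq> {}" using assms(3) facet_of_def by blast
  have "aff_dim (affine hull F) = aff_dim P - 1" using assms(3) by (simp add: facet_of_def)
  also have "\<dots> = int DIM('a) - 1" using aff_dim_nonempty_interior[OF assms(2)] by simp
  also have "\<dots> = aff_dim {x. a \<bullet> x = b}" using aff_dim_hyperplane[OF ab(1)]
    by (simp add: DIM_positive of_nat_diff)
  finally have "affine hull F = {x. a \<bullet> x = b}"
    using affine_dim_equal[OF affine_affine_hull affine_hyperplane _ sub] \<open>F \<noteq> {}\<close> by simp
  then show ?thesis using ab by blast
qed


lemma pin:
  fixes P :: "'a::euclidean_space set"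
  assumes P: "polyhedron P" "interior P \<noteq> {}" and A: "affine A"
    and ext: "z extreme_point_of (P \<inter> A)" and yA: "y \<in> A"
    and yF: "\<And>F. F facet_of P \<Longrightarrow> z \<in> F \<Longrightarrow> y \<in> affine hull F"
  shows "y = z"
proof (rule ccontr)
  assume yz: "y \<noteq> z"
  have affP: "affine hull P = UNIV" using affine_hull_nonempty_interior[OF P(2)] .
  obtain H where H: "finite H" "P = affine hull P \<inter> \<Inter>H"
     "\<And>h. h \<in> H \<Longrightarrow> \<exists>a b. a \<noteq> 0 \<and> h = {x. a \<bullet> x \<le> b}"
     "\<And>F'. F' \<subset> H \<Longrightarrow> P \<subset> affine hull P \<inter> \<Inter>F'"
    using P(1) by (simp add: polyhedron_Int_affine_minimal) meson
  then obtain a b where ab: "\<And>h. h \<in> H \<Longrightarrow> a h \<noteq> 0 \<and> h = {x. a h \<bullet> x \<le> b h}"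
    by metis
  have facet: "(C facet_of P) \<longleftrightarrow> (\<exists>h. h \<in> H \<and> C = P \<inter> {x. a h \<bullet> x = b h})" for C
    by (rule facet_of_polyhedron_explicit [OF H(1,2) ab H(4)])
  have Peq: "P = \<Inter>H" using H(2) affP by simp
  have zP: "z \<in> P" and zA: "z \<in> A" using ext by (auto simp: extreme_point_of_def)
  have zle: "a h \<bullet> z \<le> b h" if "h \<in> H" for h using zP Peq ab[OF that] that by blast
  have eqH: "a h \<bullet> y = b h" if "h \<in> H" "a h \<bullet> z = b h" for h
  proof -
    have "(P \<inter> {x. a h \<bullet> x = b h}) facet_of P" using facet that by blast
    moreover have "z \<in> P \<inter> {x. a h \<bullet> x = b h}" using zP that by blast
    ultimately have "y \<in> affine hull (P \<inter> {x. a h \<bullet> x = b h})" using yF by blast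
    moreover have "affine hull (P \<inter> {x. a h \<bullet> x = b h}) \<subseteq> {x. a h \<bullet> x = b h}"
      by (intro hull_minimal) (auto simp: affine_hyperplane)
    ultimately show ?thesis by blast
  qed
  define H2 where "H2 = {h \<in> H. a h \<bullet> z < b h}"
  define g where "g h = (b h - a h \<bullet> z) / (\<bar>a h \<bullet> (y - z)\<bar> + 1)" for h
  define t where "t = Min (insert 1 (g ` H2))"
  have finH2: "finite H2" using H(1) H2_def by simp
  have tpos: "t > 0" unfolding t_def using finH2
    by (subst Min_gr_iff) (auto simp: g_def H2_def)
  have tle: "t \<le> g h" if "h \<in> H2" for h unfolding t_def using finH2 that by (intro Min_le) auto
  have wP: "z + s *\<^sub>R (y - z) \<in> P" if st: "\<bar>s\<bar> \<le> t" for s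
  proof -
    have "z + s *\<^sub>R (y - z) \<in> h" if hH: "h \<in> H" for h
    proof (cases "a h \<bullet> z = b h")
      case True
      then have "a h \<bullet> (z + s *\<^sub>R (y - z)) = b h" using eqH[OF hH True]
        by (simp add: inner_add_right inner_diff_right)
      then show ?thesis by (subst conjunct2[OF ab[OF hH]]) simp
    next
      case False
      then have h2: "h \<in> H2" using zle[OF hH] hH H2_def by auto
      let ?m = "\<bar>a h \<bullet> (y - z)\<bar>"
      have "s * (a h \<bullet> (y - z)) \<le> \<bar>s * (a h \<bullet> (y - z))\<bar>" by (rule abs_ge_self)
      also have "\<dots> = \<bar>s\<bar> * ?m" by (simp add: abs_mult)
      also have "\<dots> \<le> t * ?m" using st by (simp add: mult_right_mono)
      also have "\<dots> \<le> g h * ?m" using tle[OF h2] by (simp add: mult_right_mono)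
      also have "\<dots> \<le> b h - a h \<bullet> z"
      proof -
        have "b h - a h \<bullet> z > 0" using h2 H2_def by auto
        then show ?thesis unfolding g_def
          by (simp add: field_simps)
      qed
      finally have "a h \<bullet> (z + s *\<^sub>R (y - z)) \<le> b h"
        by (simp add: inner_add_right inner_diff_right algebra_simps)
      then show ?thesis by (subst conjunct2[OF ab[OF hH]]) simp
    qed
    then show ?thesis using Peq by blast
  qed
  have wA: "z + s *\<^sub>R (y - z) \<in> A" for s
  proof -
    have "z + s *\<^sub>R (y - z) = (1 - s) *\<^sub>R z + s *\<^sub>R y" by (simp add: algebra_simps)
    then show ?thesis using A zA yA by (simp add: affine_alt)
  qed
  define w1 where "w1 = z + t *\<^sub>R (y - z)"
  define w2 where "w2 = z + (- t) *\<^sub>R (y - z)"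
  have w1: "w1 \<in> P \<inter> A" and w2: "w2 \<in> P \<inter> A"
    using wP[of t] wP[of "-t"] wA[of t] wA[of "-t"] tpos unfolding w1_def w2_def by auto
  have "w1 - w2 = t *\<^sub>R (y - z) + t *\<^sub>R (y - z)" unfolding w1_def w2_def by simp
  also have "\<dots> = (2 * t) *\<^sub>R (y - z)" by (metis scaleR_2 scaleR_scaleR)
  finally have "w1 - w2 = (2 * t) *\<^sub>R (y - z)" .
  then have "w1 \<noteq> w2" using tpos yz by auto
  moreover have "z = midpoint w1 w2" unfolding w1_def w2_def midpoint_def
    by (simp add: algebra_simps) (simp add: scaleR_add_left[symmetric])
  ultimately have "z \<in> open_segment w1 w2" by (simp add: midpoint_in_open_segment)
  then show False using ext w1 w2 by (auto simp: extreme_point_of_def)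
qed


lemma det2:
  fixes a1 a2 w :: pt
  assumes "a1 \<bullet> w = 0" "a2 \<bullet> w = 0" "fst a1 * snd a2 - snd a1 * fst a2 \<noteq> 0"
  shows "w = 0"
proof -
  obtain p q where w: "w = (p, q)" by (cases w)
  obtain a b where a1: "a1 = (a, b)" by (cases a1)
  obtain c d where a2: "a2 = (c, d)" by (cases a2)
  have e1: "a * p + b * q = 0" and e2: "c * p + d * q = 0" and dt: "a * d - b * c \<noteq> 0"
    using assms by (auto simp: w a1 a2 inner_Pair)
  have "p * (a * d - b * c) = d * (a * p + b * q) - b * (c * p + d * q)" by (simp add: algebra_simps)
  then have "p = 0" using e1 e2 dt by simp
  moreover have "q * (a * d - b * c) = a * (c * p + d * q) - c * (a * p + b * q)" by (simp add: algebra_simps)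
  then have "q = 0" using e1 e2 dt by simp
  ultimately show ?thesis by (simp add: w zero_prod_def)
qed

lemma perp_par:
  fixes x v :: pt
  assumes "v \<noteq> 0" "x \<bullet> (snd v, - fst v) = 0"
  shows "x = ((x \<bullet> v) / (v \<bullet> v)) *\<^sub>R v"
proof -
  obtain p q where x: "x = (p, q)" by (cases x)
  obtain c d where v: "v = (c, d)" by (cases v)
  have e: "p * d - q * c = 0" using assms by (simp add: x v inner_Pair)
  have vv: "c * c + d * d \<noteq> 0" using assms(1) v
    by (auto simp: zero_prod_def sum_squares_eq_zero_iff)
  have "p = (p * c + q * d) / (c * c + d * d) * c"
  proof -
    have "p * (c * c + d * d) = (p * c + q * d) * c + d * (p * d - q * c)" by (simp add: algebra_simps)
    then show ?thesis using e vv by (simp add: field_simps)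
  qed
  moreover have "q = (p * c + q * d) / (c * c + d * d) * d"
  proof -
    have "q * (c * c + d * d) = (p * c + q * d) * d - c * (p * d - q * c)" by (simp add: algebra_simps)
    then show ?thesis using e vv by (simp add: field_simps)
  qed
  ultimately show ?thesis by (simp add: x v inner_Pair)
qed

lemma par_perp:
  fixes a a0 v :: pt
  assumes "a0 \<noteq> 0" "fst a0 * snd a - snd a0 * fst a = 0" "a0 \<bullet> v = 0"
  shows "a \<bullet> v = 0"
proof -
  obtain p q where a0: "a0 = (p, q)" by (cases a0)
  obtain c d where v: "v = (c, d)" by (cases v)
  obtain r s where a: "a = (r, s)" by (cases a)
  have e1: "p * s - q * r = 0" and e2: "p * c + q * d = 0" using assms by (auto simp: a0 v a inner_Pair)
  have "p * (r * c + s * d) = r * (p * c + q * d) + d * (p * s - q * r)" by (simp add: algebra_simps)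
  moreover have "q * (r * c + s * d) = s * (p * c + q * d) - c * (p * s - q * r)" by (simp add: algebra_simps)
  ultimately have "p * (r * c + s * d) = 0" "q * (r * c + s * d) = 0" using e1 e2 by auto
  moreover have "p \<noteq> 0 \<or> q \<noteq> 0" using assms(1) a0 by (auto simp: zero_prod_def)
  ultimately show ?thesis by (auto simp: a v inner_Pair)
qed

lemma corner_crit:
  fixes z0 a1 a2 :: pt
  assumes "z0 \<in> B" "\<And>y. y \<in> B \<Longrightarrow> a1 \<bullet> y \<le> a1 \<bullet> z0" "\<And>y. y \<in> B \<Longrightarrow> a2 \<bullet> y \<le> a2 \<bullet> z0"
    "fst a1 * snd a2 - snd a1 * fst a2 \<noteq> 0"
  shows "z0 extreme_point_of B"
  unfolding extreme_point_of_def
proof (intro conjI ballI assms(1) notI)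
  fix x y assume xB: "x \<in> B" and yB: "y \<in> B" and zs: "z0 \<in> open_segment x y"
  then obtain u where u: "0 < u" "u < 1" "z0 = (1 - u) *\<^sub>R x + u *\<^sub>R y" "x \<noteq> y"
    by (auto simp: in_segment)
  have eq: "a \<bullet> (x - y) = 0" if "\<And>y. y \<in> B \<Longrightarrow> a \<bullet> y \<le> a \<bullet> z0" for a
  proof -
    have p1: "a \<bullet> z0 - a \<bullet> x \<ge> 0" and p2: "a \<bullet> z0 - a \<bullet> y \<ge> 0" using that xB yB by auto
    have "a \<bullet> z0 = (1 - u) * (a \<bullet> x) + u * (a \<bullet> y)" using u(3) by (simp add: inner_add_right)
    then have s: "(1 - u) * (a \<bullet> z0 - a \<bullet> x) + u * (a \<bullet> z0 - a \<bullet> y) = 0" by (simp add: algebra_simps)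
    have t1: "(1 - u) * (a \<bullet> z0 - a \<bullet> x) \<ge> 0" using p1 u by simp
    have t2: "u * (a \<bullet> z0 - a \<bullet> y) \<ge> 0" using p2 u by simp
    have "(1 - u) * (a \<bullet> z0 - a \<bullet> x) = 0" "u * (a \<bullet> z0 - a \<bullet> y) = 0" using s t1 t2 by linarith+
    then have "a \<bullet> z0 - a \<bullet> x = 0" "a \<bullet> z0 - a \<bullet> y = 0" using u by auto
    then show ?thesis by (simp add: inner_diff_right)
  qed
  have "x - y = 0" using det2[OF eq[OF assms(2)] eq[OF assms(3)] assms(4)] .
  then show False using u(4) by simp
qed

lemma antipode_crit:
  fixes p w a v :: pt
  assumes "w \<in> B" "(w - p) \<bullet> (snd v, - fst v) = 0" "v \<noteq> 0" "a \<bullet> v \<noteq> 0"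
    "\<And>y. y \<in> B \<Longrightarrow> a \<bullet> y \<le> a \<bullet> w"
  shows "w extreme_point_of (B \<inter> {p + t *\<^sub>R v | t. True})"
proof (rule extreme_point_of_Int_supporting_hyperplane_le[where a = a and b = "a \<bullet> w"])
  define t0 where "t0 = ((w - p) \<bullet> v) / (v \<bullet> v)"
  have wL: "w = p + t0 *\<^sub>R v" using perp_par[OF assms(3,2)] unfolding t0_def
    by (metis add.commute diff_add_cancel)
  show "(B \<inter> {p + t *\<^sub>R v | t. True}) \<inter> {x. a \<bullet> x = a \<bullet> w} = {w}"
  proof
    show "{w} \<subseteq> (B \<inter> {p + t *\<^sub>R v | t. True}) \<inter> {x. a \<bullet> x = a \<bullet> w}" using assms(1) wL by auto
    show "(B \<inter> {p + t *\<^sub>R v | t. True}) \<inter> {x. a \<bullet> x = a \<bullet> w} \<subseteq> {w}"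
    proof
      fix x assume "x \<in> (B \<inter> {p + t *\<^sub>R v | t. True}) \<inter> {x. a \<bullet> x = a \<bullet> w}"
      then obtain t where x: "x = p + t *\<^sub>R v" and ax: "a \<bullet> x = a \<bullet> w" by auto
      have "a \<bullet> p + t * (a \<bullet> v) = a \<bullet> p + t0 * (a \<bullet> v)"
        using ax by (simp add: x wL inner_add_right)
      then have "t = t0" using assms(4) by simp
      then show "x \<in> {w}" using x wL by simp
    qed
  qed
  show "\<And>x. x \<in> B \<inter> {p + t *\<^sub>R v | t. True} \<Longrightarrow> a \<bullet> x \<le> a \<bullet> w" using assms(5) by blast
qed


lemma seg_comp:
  fixes x y z :: "(pt, 'q::finite) vec"
  assumes "z \<in> open_segment x y" "x$k \<noteq> y$k"
  shows "z$k \<in> open_segment (x$k) (y$k)"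
proof -
  obtain u where u: "0 < u" "u < 1" "z = (1 - u) *\<^sub>R x + u *\<^sub>R y"
    using assms(1) by (auto simp: in_segment)
  then have "z$k = (1 - u) *\<^sub>R x$k + u *\<^sub>R y$k" by simp
  then show ?thesis using u(1,2) assms(2) by (auto simp: in_segment)
qed

lemma seg_comp_eq:
  fixes x y z :: "(pt, 'q::finite) vec"
  assumes "z \<in> open_segment x y" "x$k = y$k"
  shows "z$k = x$k"
proof -
  obtain u where u: "0 < u" "u < 1" "z = (1 - u) *\<^sub>R x + u *\<^sub>R y"
    using assms(1) by (auto simp: in_segment)
  then have "z$k = (1 - u) *\<^sub>R x$k + u *\<^sub>R x$k" using assms(2) by simp
  also have "\<dots> = x$k" by (simp add: scaleR_add_left[symmetric])
  finally show ?thesis .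
qed

lemma vertex_from_pin:
  fixes z0 :: "(pt, 'q::{finite,linorder}) vec"
  assumes Bb: "board B" and S: "S \<subseteq> {(i, j). i < j}"
    and ext: "z0 extreme_point_of (board_power B \<inter> (\<Inter>(i, j)\<in>S. rider_hyperplane c d i j))"
    and aff: "affine (\<Inter>(i, j)\<in>S. rider_hyperplane c d i j :: (pt, 'q) vec set)"
  shows "z0 \<in> iop_vertices c d B"
proof -
  define BP where "BP = (board_power B :: (pt, 'q) vec set)"
  define A where "A = (\<Inter>(i, j)\<in>S. rider_hyperplane c d i j :: (pt, 'q) vec set)"
  have PB: "polyhedron B" and IB: "interior B \<noteq> {}"
    using Bb by (auto simp: board_def polytope_imp_polyhedron)
  have PBP: "polyhedron BP" unfolding BP_def by (rule bp_polyhedron[OF PB])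
  have IBP: "interior BP \<noteq> {}" unfolding BP_def by (rule bp_interior[OF IB])
  have z0: "z0 \<in> BP" "z0 \<in> A" using ext by (auto simp: extreme_point_of_def BP_def A_def)
  define \<FF> where "\<FF> = {F. F facet_of BP \<and> z0 \<in> F}"
  have "A \<inter> (\<Inter>F\<in>\<FF>. affine hull F) = {z0}"
  proof
    show "{z0} \<subseteq> A \<inter> (\<Inter>F\<in>\<FF>. affine hull F)" using z0 by (auto simp: \<FF>_def hull_inc)
    show "A \<inter> (\<Inter>F\<in>\<FF>. affine hull F) \<subseteq> {z0}"
    proof
      fix y assume y: "y \<in> A \<inter> (\<Inter>F\<in>\<FF>. affine hull F)"
      have "y = z0"
      proof (rule pin[OF PBP IBP _ _ ])
        show "affine A" using aff by (simp add: A_def)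
        show "z0 extreme_point_of (BP \<inter> A)" using ext by (simp add: BP_def A_def)
        show "y \<in> A" using y by blast
        show "\<And>F. F facet_of BP \<Longrightarrow> z0 \<in> F \<Longrightarrow> y \<in> affine hull F" using y by (auto simp: \<FF>_def)
      qed
      then show "y \<in> {z0}" by simp
    qed
  qed
  then show ?thesis unfolding iop_vertices_def using z0 S
    by (auto simp: BP_def A_def \<FF>_def hull_inc intro!: exI[of _ S] exI[of _ \<FF>])
qed


lemma vertex_pieces:
  fixes z :: "(pt, 'q::{finite,linorder}) vec"
  assumes cd: "(c, d) \<noteq> (0, 0)" and Bb: "board B" and zv: "z \<in> iop_vertices c d B"
  shows "z$k \<in> corners B \<or> (\<exists>j. z$j \<in> corners B \<and> z$k \<in> antipodes c d B (z$j))"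
proof -
  define v :: pt where "v = (of_int c, of_int d)"
  define n :: pt where "n = (of_int d, - of_int c)"
  have v0: "v \<noteq> 0" using cd by (auto simp: v_def zero_prod_def)
  have nv: "n = (snd v, - fst v)" by (simp add: n_def v_def)
  have vn: "v \<bullet> n = 0" by (simp add: v_def n_def inner_Pair)
  have PB: "polyhedron B" and IB: "interior B \<noteq> {}"
    using Bb by (auto simp: board_def polytope_imp_polyhedron)
  define BP where "BP = (board_power B :: (pt, 'q) vec set)"
  have PBP: "polyhedron BP" unfolding BP_def by (rule bp_polyhedron[OF PB])
  have IBP: "interior BP \<noteq> {}" unfolding BP_def by (rule bp_interior[OF IB])
  obtain S \<FF> where zBP: "z \<in> BP" and Ssub: "S \<subseteq> {(i, j). i < j}"
    and Ff: "\<forall>F\<in>\<FF>. F facet_of BP"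
    and zeq: "(\<Inter>(i, j)\<in>S. rider_hyperplane c d i j) \<inter> (\<Inter>F\<in>\<FF>. affine hull F) = {z}"
    using zv unfolding iop_vertices_def BP_def by blast
  have "\<forall>F\<in>\<FF>. \<exists>a b. a \<noteq> 0 \<and> BP \<subseteq> {x. a \<bullet> x \<le> b} \<and> affine hull F = {x. a \<bullet> x = b}"
    using Ff facet_hyp[OF PBP IBP] by blast
  then obtain a b where ab: "\<And>F. F \<in> \<FF> \<Longrightarrow> BP \<subseteq> {x. a F \<bullet> x \<le> b F} \<and> affine hull F = {x. a F \<bullet> x = b F}"
    by metis
  have zin: "z \<in> (\<Inter>(i, j)\<in>S. rider_hyperplane c d i j) \<inter> (\<Inter>F\<in>\<FF>. affine hull F)" using zeq by blast
  have zS: "(z$j - z$i) \<bullet> n = 0" if "(i, j) \<in> S" for i j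
    using zin that by (auto simp: rider_hyperplane_def n_def)
  have zF: "a F \<bullet> z = b F" if "F \<in> \<FF>" for F using zin that ab[OF that] by blast
  have zB: "z$j \<in> B" for j using zBP by (simp add: BP_def board_power_def)
  have pert: "\<delta> = 0" if d1: "\<And>i j. (i, j) \<in> S \<Longrightarrow> (\<delta>$j - \<delta>$i) \<bullet> n = 0"
    and d2: "\<And>F k. F \<in> \<FF> \<Longrightarrow> a F $ k \<bullet> \<delta> $ k = 0" for \<delta> :: "(pt, 'q) vec"
  proof -
    have "z + \<delta> \<in> (\<Inter>(i, j)\<in>S. rider_hyperplane c d i j) \<inter> (\<Inter>F\<in>\<FF>. affine hull F)"
    proof (intro IntI)
      show "z + \<delta> \<in> (\<Inter>(i, j)\<in>S. rider_hyperplane c d i j)"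
      proof (clarsimp)
        fix i j assume ij: "(i, j) \<in> S"
        have "((z + \<delta>)$j - (z + \<delta>)$i) \<bullet> n = (z$j - z$i) \<bullet> n + (\<delta>$j - \<delta>$i) \<bullet> n"
          by (simp add: algebra_simps inner_add_left inner_diff_left)
        then have "((z + \<delta>)$j - (z + \<delta>)$i) \<bullet> n = 0" using zS[OF ij] d1[OF ij] by simp
        then show "z + \<delta> \<in> rider_hyperplane c d i j" by (simp add: rider_hyperplane_def n_def)
      qed
      show "z + \<delta> \<in> (\<Inter>F\<in>\<FF>. affine hull F)"
      proof (clarify)
        fix F assume F: "F \<in> \<FF>"
        have "a F \<bullet> \<delta> = 0" unfolding inner_vec_def using d2[OF F] by simp
        then have "a F \<bullet> (z + \<delta>) = b F" using zF[OF F] by (simp add: inner_add_right)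
        then show "z + \<delta> \<in> affine hull F" using ab[OF F] by blast
      qed
    qed
    then have "z + \<delta> = z" using zeq by blast
    then show ?thesis by simp
  qed
  have maxi: "a F $ j \<bullet> y \<le> a F $ j \<bullet> z $ j" if F: "F \<in> \<FF>" and yB: "y \<in> B" for F j y
  proof -
    define w where "w = z + axis j (y - z$j)"
    have "w$i = (if i = j then y else z$i)" for i by (simp add: w_def axis_def)
    then have "w \<in> BP" using yB zB by (simp add: BP_def board_power_def)
    then have "a F \<bullet> w \<le> b F" using ab[OF F] by blast
    moreover have "a F \<bullet> w = a F \<bullet> z + a F $ j \<bullet> (y - z$j)"
      by (simp add: w_def inner_add_right inner_commute[of "a F"] inner_axis') (rule inner_commute)
    ultimately show ?thesis using zF[OF F] by (simp add: inner_diff_right)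
  qed
  have axfree: False if af: "\<And>F. F \<in> \<FF> \<Longrightarrow> a F $ j \<bullet> v = 0" for j
  proof -
    define \<delta> where "\<delta> = (axis j v :: (pt, 'q) vec)"
    have dc: "\<delta>$i = (if i = j then v else 0)" for i by (simp add: \<delta>_def axis_def)
    have "\<delta> = 0"
    proof (rule pert)
      show "(\<delta>$j' - \<delta>$i) \<bullet> n = 0" for i j' by (simp add: dc inner_diff_left vn)
      show "a F $ k \<bullet> \<delta> $ k = 0" if "F \<in> \<FF>" for F k using af[OF that] by (simp add: dc)
    qed
    moreover have "\<delta>$j \<noteq> 0" using dc v0 by simp
    ultimately show False by simp
  qed
  have nonfree: "\<exists>F0\<in>\<FF>. a F0 $ j \<bullet> v \<noteq> 0 \<and> (\<exists>u. u \<bullet> n \<noteq> 0 \<and> (\<forall>F\<in>\<FF>. a F $ j \<bullet> u = 0))"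
    if nc: "z$j \<notin> corners B" for j
  proof -
    have indep: "fst (a F1 $ j) * snd (a F2 $ j) - snd (a F1 $ j) * fst (a F2 $ j) = 0"
      if "F1 \<in> \<FF>" "F2 \<in> \<FF>" for F1 F2
    proof (rule ccontr)
      assume "fst (a F1 $ j) * snd (a F2 $ j) - snd (a F1 $ j) * fst (a F2 $ j) \<noteq> 0"
      then have "z$j extreme_point_of B"
        using corner_crit[OF zB maxi[OF that(1)] maxi[OF that(2)]] by blast
      then show False using nc by (simp add: corners_def)
    qed
    obtain F0 where F0: "F0 \<in> \<FF>" "a F0 $ j \<noteq> 0"
      using axfree[of j] by fastforce
    define a0 where "a0 = a F0 $ j"
    have a0v: "a0 \<bullet> v \<noteq> 0"
    proof
      assume "a0 \<bullet> v = 0"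
      then have "a F $ j \<bullet> v = 0" if "F \<in> \<FF>" for F
        using par_perp[OF _ indep[OF F0(1) that]] F0(2) a0_def by blast
      then show False using axfree by blast
    qed
    define u :: pt where "u = (- snd a0, fst a0)"
    have "u \<bullet> n = - (a0 \<bullet> v)" by (simp add: u_def n_def v_def inner_Pair prod_eq_iff)
      (cases a0, simp add: inner_Pair)
    then have "u \<bullet> n \<noteq> 0" using a0v by simp
    moreover have "a F $ j \<bullet> u = 0" if "F \<in> \<FF>" for F
    proof -
      have "a F $ j \<bullet> u = fst a0 * snd (a F $ j) - snd a0 * fst (a F $ j)"
        by (cases "a F $ j") (simp add: u_def inner_Pair algebra_simps)
      then show ?thesis using indep[OF F0(1) that] a0_def by simp
    qed
    ultimately show ?thesis using F0(1) a0v a0_def by blast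
  qed
  show ?thesis
  proof (cases "z$k \<in> corners B")
    case True then show ?thesis by blast
  next
    case nk: False
    show ?thesis
    proof (cases "\<exists>j. (z$j - z$k) \<bullet> n = 0 \<and> z$j \<in> corners B")
      case True
      then obtain j where j: "(z$j - z$k) \<bullet> n = 0" "z$j \<in> corners B" by blast
      obtain F0 where F0: "F0 \<in> \<FF>" "a F0 $ k \<bullet> v \<noteq> 0" using nonfree[OF nk] by blast
      have "z$k extreme_point_of (B \<inter> {z$j + t *\<^sub>R v | t. True})"
      proof (rule antipode_crit[OF zB _ v0 F0(2)])
        show "(z$k - z$j) \<bullet> (snd v, - fst v) = 0" using j(1) nv
          by (metis inner_minus_left minus_diff_eq neg_equal_0_iff_equal)
        show "\<And>y. y \<in> B \<Longrightarrow> a F0 $ k \<bullet> y \<le> a F0 $ k \<bullet> z $ k" using maxi[OF F0(1)] by blast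
      qed
      moreover have "z$k \<noteq> z$j" using nk j(2) by auto
      ultimately have "z$k \<in> antipodes c d B (z$j)" by (simp add: antipodes_def v_def)
      then show ?thesis using j(2) by blast
    next
      case False
      define C where "C = {j. (z$j - z$k) \<bullet> n = 0}"
      have Cnc: "z$j \<notin> corners B" if "j \<in> C" for j using False that C_def by blast
      define U where "U j = (SOME u. u \<bullet> n \<noteq> 0 \<and> (\<forall>F\<in>\<FF>. a F $ j \<bullet> u = 0))" for j
      have U: "U j \<bullet> n \<noteq> 0 \<and> (\<forall>F\<in>\<FF>. a F $ j \<bullet> U j = 0)" if "j \<in> C" for j
        unfolding U_def using nonfree[OF Cnc[OF that]] by (rule someI_ex[OF bexE]) blast+
      define \<delta> :: "(pt, 'q) vec" where "\<delta> = (\<chi> j. if j \<in> C then (1 / (U j \<bullet> n)) *\<^sub>R U j else 0)"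
      have dn: "\<delta>$j \<bullet> n = (if j \<in> C then 1 else 0)" for j
        using U[of j] by (simp add: \<delta>_def)
      have "\<delta> = 0"
      proof (rule pert)
        fix i j assume ij: "(i, j) \<in> S"
        have "(z$j - z$k) \<bullet> n = (z$j - z$i) \<bullet> n + (z$i - z$k) \<bullet> n"
          by (simp add: inner_diff_left)
        then have "j \<in> C \<longleftrightarrow> i \<in> C" using zS[OF ij] by (simp add: C_def)
        then show "(\<delta>$j - \<delta>$i) \<bullet> n = 0" by (simp add: inner_diff_left dn)
      next
        fix F k' assume F: "F \<in> \<FF>"
        show "a F $ k' \<bullet> \<delta> $ k' = 0" using U[of k'] F by (simp add: \<delta>_def)
      qed
      moreover have "k \<in> C" by (simp add: C_def)
      then have "\<delta>$k \<bullet> n = 1" using dn by simp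
      ultimately show ?thesis by simp
    qed
  qed
qed


lemma corner_vertex:
  assumes Bb: "board B" and p: "p \<in> corners B"
  shows "(\<chi> i. p :: (pt, 'q::{finite,linorder}) vec) \<in> iop_vertices c d B"
proof (rule vertex_from_pin[OF Bb, where S = "{}"])
  have pe: "p extreme_point_of B" using p by (simp add: corners_def)
  show "(\<chi> i. p) extreme_point_of (board_power B \<inter> (\<Inter>(i, j)\<in>{}. rider_hyperplane c d i j))"
    unfolding extreme_point_of_def
  proof (intro conjI ballI notI)
    show "(\<chi> i. p) \<in> board_power B \<inter> (\<Inter>(i, j)\<in>{}. rider_hyperplane c d i j)"
      using pe by (auto simp: board_power_def extreme_point_of_def)
    fix x y assume x: "x \<in> board_power B \<inter> (\<Inter>(i, j)\<in>{}. rider_hyperplane c d i j)"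
      and y: "y \<in> board_power B \<inter> (\<Inter>(i, j)\<in>{}. rider_hyperplane c d i j)"
      and s: "(\<chi> i. p) \<in> open_segment x y"
    have "x \<noteq> y" using s by auto
    then obtain k where k: "x$k \<noteq> y$k" by (metis vec_eq_iff)
    have "p \<in> open_segment (x$k) (y$k)" using seg_comp[OF s k] by simp
    moreover have "x$k \<in> B" "y$k \<in> B" using x y by (auto simp: board_power_def)
    ultimately show False using pe by (auto simp: extreme_point_of_def)
  qed
qed auto

lemma antipode_vertex:
  fixes i j :: "'q::{finite,linorder}"
  assumes Bb: "board B" and cd: "(c, d) \<noteq> (0, 0)" and p: "p \<in> corners B"
    and w: "w \<in> antipodes c d B p" and ij: "i < j"
  shows "(\<chi> x. if x = j then w else p :: (pt, 'q) vec) \<in> iop_vertices c d B"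
proof (rule vertex_from_pin[OF Bb, where S = "{(i, j)}"])
  define v :: pt where "v = (of_int c, of_int d)"
  define n :: pt where "n = (of_int d, - of_int c)"
  have v0: "v \<noteq> 0" using cd by (auto simp: v_def zero_prod_def)
  have nv: "n = (snd v, - fst v)" by (simp add: n_def v_def)
  have vn: "v \<bullet> n = 0" by (simp add: v_def n_def inner_Pair)
  define L where "L = {p + t *\<^sub>R v | t. True}"
  have pe: "p extreme_point_of B" using p by (simp add: corners_def)
  have we: "w extreme_point_of (B \<inter> L)" and wp: "w \<noteq> p"
    using w by (auto simp: antipodes_def L_def v_def)
  have wB: "w \<in> B" and wL: "w \<in> L" using we by (auto simp: extreme_point_of_def)
  have RH: "rider_hyperplane c d i j = {z :: (pt,'q) vec. (z$j - z$i) \<bullet> n = 0}"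
    by (simp add: rider_hyperplane_def n_def)
  have RH2: "rider_hyperplane c d i j = {z :: (pt,'q) vec. (axis j n - axis i n) \<bullet> z = 0}"
  proof -
    have "(axis j n - axis i n) \<bullet> z = (z$j - z$i) \<bullet> n" for z :: "(pt,'q) vec"
      by (simp only: inner_diff_left inner_axis') (simp add: inner_commute)
    then show ?thesis unfolding RH by simp
  qed
  show "affine (\<Inter>(i', j')\<in>{(i, j)}. rider_hyperplane c d i' j' :: (pt, 'q) vec set)"
    by (simp add: RH2 affine_hyperplane)
  show "{(i, j)} \<subseteq> {(i, j). i < j}" using ij by simp
  define z0 :: "(pt, 'q) vec" where "z0 = (\<chi> x. if x = j then w else p)"
  have ineq: "i \<noteq> j" using ij by simp
  have inL: "x \<in> L" if "(x - p) \<bullet> n = 0" for x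
  proof -
    have "x - p = ((x - p) \<bullet> v / (v \<bullet> v)) *\<^sub>R v" using perp_par[OF v0] that nv by simp
    then have "x = p + ((x - p) \<bullet> v / (v \<bullet> v)) *\<^sub>R v" by (metis add.commute diff_add_cancel)
    then show ?thesis unfolding L_def by blast
  qed
  have z0A: "z0 \<in> rider_hyperplane c d i j"
  proof -
    obtain t where "w = p + t *\<^sub>R v" using wL L_def by blast
    then have "(w - p) \<bullet> n = 0" using vn by simp
    then show ?thesis unfolding RH z0_def using ineq by simp
  qed
  show "z0 extreme_point_of (board_power B \<inter> (\<Inter>(i', j')\<in>{(i, j)}. rider_hyperplane c d i' j'))"
    unfolding extreme_point_of_def
  proof (intro conjI ballI notI)
    show "z0 \<in> board_power B \<inter> (\<Inter>(i', j')\<in>{(i, j)}. rider_hyperplane c d i' j')"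
      using pe wB z0A by (auto simp: board_power_def extreme_point_of_def z0_def)
    fix x y assume x: "x \<in> board_power B \<inter> (\<Inter>(i', j')\<in>{(i, j)}. rider_hyperplane c d i' j')"
      and y: "y \<in> board_power B \<inter> (\<Inter>(i', j')\<in>{(i, j)}. rider_hyperplane c d i' j')"
      and s: "z0 \<in> open_segment x y"
    have xB: "x$k \<in> B" and yB: "y$k \<in> B" for k using x y by (auto simp: board_power_def)
    have xA: "(x$j - x$i) \<bullet> n = 0" and yA: "(y$j - y$i) \<bullet> n = 0" using x y by (auto simp: RH)
    have other: "x$k = y$k" if "k \<noteq> j" for k
    proof (rule ccontr)
      assume "x$k \<noteq> y$k"
      then have "z0$k \<in> open_segment (x$k) (y$k)" using seg_comp[OF s] by blast
      then have "p \<in> open_segment (x$k) (y$k)" using that by (simp add: z0_def)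
      then show False using pe xB yB by (auto simp: extreme_point_of_def)
    qed
    have xi: "x$i = p" and yi: "y$i = p"
      using seg_comp_eq[OF s other[OF ineq]] other[OF ineq] ineq by (simp_all add: z0_def)
    have "x$j = y$j"
    proof (rule ccontr)
      assume "x$j \<noteq> y$j"
      then have "z0$j \<in> open_segment (x$j) (y$j)" using seg_comp[OF s] by blast
      then have "w \<in> open_segment (x$j) (y$j)" by (simp add: z0_def)
      moreover have "x$j \<in> B \<inter> L" "y$j \<in> B \<inter> L" using xB yB inL xA yA xi yi by auto
      ultimately show False using we by (auto simp: extreme_point_of_def)
    qed
    then have "x = y" using other by (metis vec_eq_iff)
    then show False using s by simp
  qed
qed


theorem proposition4p1:
  fixes c d :: int and B :: "pt set"
  assumes "(c, d) \<noteq> (0, 0)" and "gcd c d = 1"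
    and "board B"
  shows "iop_denominator c d B TYPE('q::{finite,linorder}) =
    (if CARD('q) = 1 then lcd_pts (corners B)
     else lcd_pts (corners B \<union> (\<Union>z\<in>corners B. antipodes c d B z)))"
proof -
  define T where "T = (if CARD('q) = 1 then corners B
     else corners B \<union> (\<Union>z\<in>corners B. antipodes c d B z))"
  define V where "V = (iop_vertices c d B :: (pt, 'q) vec set)"
  define dp where "dp p = lcm (real_den (fst p)) (real_den (snd p))" for p :: pt
  define dz where "dz z = Lcm ((\<lambda>k. dp (z$k)) ` (UNIV :: 'q set))" for z :: "(pt, 'q) vec"
  have lhs: "iop_denominator c d B TYPE('q) = Lcm (dz ` V)"
    by (simp add: iop_denominator_def lcd_cfgs_def V_def dz_def dp_def)
  have rhs: "(if CARD('q) = 1 then lcd_pts (corners B)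
     else lcd_pts (corners B \<union> (\<Union>z\<in>corners B. antipodes c d B z))) = Lcm (dp ` T)"
    by (simp add: T_def lcd_pts_def dp_def)
  have A: "z$k \<in> T" if "z \<in> V" for z k
  proof -
    have "z$k \<in> corners B \<or> (\<exists>j. z$j \<in> corners B \<and> z$k \<in> antipodes c d B (z$j))"
      using vertex_pieces[OF assms(1,3)] that V_def by blast
    then show ?thesis
    proof
      assume "z$k \<in> corners B" then show ?thesis by (simp add: T_def)
    next
      assume "\<exists>j. z$j \<in> corners B \<and> z$k \<in> antipodes c d B (z$j)"
      then obtain j where j: "z$j \<in> corners B" "z$k \<in> antipodes c d B (z$j)" by blast
      show ?thesis
      proof (cases "CARD('q) = 1")
        case True
        then have "j = k" using card_1_singletonE[of "UNIV :: 'q set"] by (metis UNIV_I singletonD)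
        then show ?thesis using j(2) by (simp add: antipodes_def)
      next
        case False then show ?thesis using j by (auto simp: T_def)
      qed
    qed
  qed
  have B: "\<exists>z\<in>V. \<exists>k. z$k = p" if "p \<in> T" for p
  proof (cases "p \<in> corners B")
    case True
    then show ?thesis using corner_vertex[OF assms(3) True, where 'q='q and c=c and d=d]
      unfolding V_def by (metis vec_lambda_beta)
  next
    case False
    then have c1: "CARD('q) \<noteq> 1" and "p \<in> (\<Union>z\<in>corners B. antipodes c d B z)"
      using that by (auto simp: T_def split: if_splits)
    then obtain q0 where q0: "q0 \<in> corners B" "p \<in> antipodes c d B q0" by blast
    have "\<not> (\<forall>x \<in> (UNIV :: 'q set). \<forall>y \<in> UNIV. x = y)"
    proof
      assume "\<forall>x \<in> (UNIV :: 'q set). \<forall>y \<in> UNIV. x = y"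
      then have "card (UNIV :: 'q set) \<le> Suc 0" using card_le_Suc0_iff_eq[of "UNIV :: 'q set"] by simp
      moreover have "card (UNIV :: 'q set) > 0" by simp
      ultimately show False using c1 by simp
    qed
    then obtain i j :: 'q where "i \<noteq> j" by blast
    then have ij: "min i j < max i j" by (auto simp: min_def max_def)
    have "(\<chi> x. if x = max i j then p else q0 :: (pt, 'q) vec) \<in> V"
      using antipode_vertex[OF assms(3,1) q0 ij] by (simp add: V_def)
    moreover have "(\<chi> x. if x = max i j then p else q0 :: (pt, 'q) vec) $ max i j = p" by simp
    ultimately show ?thesis by blast
  qed
  have d1: "Lcm (dz ` V) dvd Lcm (dp ` T)"
  proof (rule Lcm_least)
    fix m assume "m \<in> dz ` V"
    then obtain z where z: "z \<in> V" "m = dz z" by blast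
    show "m dvd Lcm (dp ` T)" unfolding z(2) dz_def
      by (rule Lcm_least) (use A[OF z(1)] in \<open>auto intro: dvd_Lcm\<close>)
  qed
  have d2: "Lcm (dp ` T) dvd Lcm (dz ` V)"
  proof (rule Lcm_least)
    fix m assume "m \<in> dp ` T"
    then obtain p where p: "p \<in> T" "m = dp p" by blast
    obtain z k where z: "z \<in> V" "z$k = p" using B[OF p(1)] by blast
    have "dp p dvd dz z" unfolding dz_def using z(2) by (auto intro: dvd_Lcm)
    also have "dz z dvd Lcm (dz ` V)" using z(1) by (auto intro: dvd_Lcm)
    finally show "m dvd Lcm (dz ` V)" using p(2) by simp
  qed
  show ?thesis unfolding lhs rhs using d1 d2 by (rule dvd_antisym)
qed

end
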